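(* Let $(\mathcal E_1,\mathcal M_1)$ be an augmentation of a network $(\mathcal E_0,\mathcal M_0)$, and assume $(\mathcal E_0,\mathcal M_0)$ is regular. Assume there exists a partial child selection $J^\vee:\mathcal M_1\setminus\mathcal M_0\to\mathcal E_1\setminus\mathcal E_0$ in the augmented network (injective, with $m\vdash J^\vee(m)$ in $(\mathcal E_1,\mathcal M_1)$ for all $m$) such that the square submatrix of $S_1$ with rows $\mathcal M_1\setminus\mathcal M_0$ and columns $J^\vee(\mathcal M_1\setminus\mathcal M_0)$ is nonsingular. (If $\mathcal M_1=\mathcal M_0$, this condition is vacuous.) Then $(\mathcal E_1,\mathcal M_1)$ is regular, and every influence $j^*\leadsto\alpha$ with $j^*\in\mathcal E_0$, $\alpha\in\mathcal E_0\cup\mathcal M_0$ that holds in $(\mathcal E_0,\mathcal M_0)$ also holds in $(\mathcal E_1,\mathcal M_1)$.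
   Context: A reaction network $(\mathcal E,\mathcal M)$ consists of a finite set of metabolites $\mathcal M$ and a finite set of reactions $\mathcal E$; each reaction $j$ has input and output stoichiometric vectors $y^j,\bar y^j\in\mathbb R_{\ge0}^{\mathcal M}$; $m\vdash j$ iff $y^j_m\ne0$. The stoichiometric matrix $S$ ($\mathcal M\times\mathcal E$) has columns $S^j=\bar y^j-y^j$. The rate matrix $R=(r_{jm})$ ($\mathcal E\times\mathcal M$) has independent indeterminates $r_{jm}$ for $m\vdash j$ and zeros otherwise. "Nonzero algebraically" means nonzero as a polynomial/rational function in these indeterminates. The network is regular if $S$ has full row rank and $\det(SR)\neq0$ algebraically. Let $B=\begin{pmatrix}-\mathrm{id}_{\mathcal E}&R\\ S&0\end{pmatrix}$ (indexed by $\mathcal E\sqcup\mathcal M$); for $\alpha\in\mathcal E\sqcup\mathcal M$ set $z^\alpha=-B^{-1}e_\alpha$ and write $\alpha\leadsto\beta$ if $z^\alpha_\beta$ is nonzero algebraically (this relation is relative to the network considered). A network $(\mathcal E_1,\mathcal M_1)$ is an augmentation of $(\mathcal E_0,\mathcal M_0)$ if $\mathcal E_1\supseteq\mathcal E_0$, $\mathcal M_1\supseteq\mathcal M_0$, and for every $j\in\mathcal E_0$ the stoichiometric vectors $y^j,\bar y^j$ in $(\mathcal E_1,\mathcal M_1)$ coincide with those in $(\mathcal E_0,\mathcal M_0)$ padded by zeros on $\mathcal M_1\setminus\mathcal M_0$; in particular the stoichiometric matrices satisfy $S_0=(S_1)^{\mathcal E_0}_{\mathcal M_0}$ and $(S_1)^{\mathcal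 E_0}_{\mathcal M_1\setminus\mathcal M_0}=0$. *)

theory Defs
  imports "HOL-Analysis.Analysis"
begin

text \<open>A reaction network is given by a finite set of reactions E, a finite set of
metabolites M, and input/output stoichiometric coefficients y j m, yb j m
(meaningful only for j in E, m in M).\<close>

definition network :: "'e set \<Rightarrow> 'm set \<Rightarrow> ('e \<Rightarrow> 'm \<Rightarrow> real) \<Rightarrow> ('e \<Rightarrow> 'm \<Rightarrow> real) \<Rightarrow> bool" where
  "network E M y yb \<longleftrightarrow> finite E \<and> finite M \<and>
     (\<forall>j\<in>E. \<forall>m\<in>M. 0 \<le> y j m \<and> 0 \<le> yb j m)"

definition vdash :: "('e \<Rightarrow> 'm \<Rightarrow> real) \<Rightarrow> 'm \<Rightarrow> 'e \<Rightarrow> bool" where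
  "vdash y m j \<longleftrightarrow> y j m \<noteq> 0"

definition stoich :: "('e \<Rightarrow> 'm \<Rightarrow> real) \<Rightarrow> ('e \<Rightarrow> 'm \<Rightarrow> real) \<Rightarrow> 'm \<Rightarrow> 'e \<Rightarrow> real" where
  "stoich y yb m j = yb j m - y j m"

definition det_on :: "'a set \<Rightarrow> ('a \<Rightarrow> 'a \<Rightarrow> real) \<Rightarrow> real" where
  "det_on A f = (\<Sum>p | p permutes A. of_int (sign p) * (\<Prod>i\<in>A. f i (p i)))"

text \<open>A real assignment of the indeterminates r_{jm}: arbitrary for m \<turnstile> j,
zero otherwise.  A polynomial/rational function in the r_{jm} is nonzero
algebraically iff it is nonzero at some such real assignment (where defined).\<close>
definition rate_assign :: "'e set \<Rightarrow> 'm set \<Rightarrow> ('e \<Rightarrow> 'm \<Rightarrow> real) \<Rightarrow> ('e \<Rightarrow> 'm \<Rightarrow> real) \<Rightarrow> bool" where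
  "rate_assign E M y r \<longleftrightarrow> (\<forall>j m. \<not> (j \<in> E \<and> m \<in> M \<and> vdash y m j) \<longrightarrow> r j m = 0)"

definition full_row_rank :: "'e set \<Rightarrow> 'm set \<Rightarrow> ('m \<Rightarrow> 'e \<Rightarrow> real) \<Rightarrow> bool" where
  "full_row_rank E M S \<longleftrightarrow>
     (\<forall>c. (\<forall>j\<in>E. (\<Sum>m\<in>M. c m * S m j) = 0) \<longrightarrow> (\<forall>m\<in>M. c m = 0))"

definition regular :: "'e set \<Rightarrow> 'm set \<Rightarrow> ('e \<Rightarrow> 'm \<Rightarrow> real) \<Rightarrow> ('e \<Rightarrow> 'm \<Rightarrow> real) \<Rightarrow> bool" where
  "regular E M y yb \<longleftrightarrow> full_row_rank E M (stoich y yb) \<and>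
     (\<exists>r. rate_assign E M y r \<and>
        det_on M (\<lambda>m m'. \<Sum>j\<in>E. stoich y yb m j * r j m') \<noteq> 0)"

text \<open>The matrix B = ((-id, R), (S, 0)) indexed by E \<sqcup> M (as Inl ` E \<union> Inr ` M).\<close>
fun Bmat :: "('e \<Rightarrow> 'm \<Rightarrow> real) \<Rightarrow> ('e \<Rightarrow> 'm \<Rightarrow> real) \<Rightarrow> ('e \<Rightarrow> 'm \<Rightarrow> real)
              \<Rightarrow> 'e + 'm \<Rightarrow> 'e + 'm \<Rightarrow> real" where
  "Bmat y yb r (Inl j) (Inl j') = (if j = j' then -1 else 0)"
| "Bmat y yb r (Inl j) (Inr m) = r j m"
| "Bmat y yb r (Inr m) (Inl j) = stoich y yb m j"
| "Bmat y yb r (Inr m) (Inr m') = 0"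

text \<open>alpha \<leadsto> beta: the entry beta of z^alpha = -B^{-1} e_alpha (i.e. the unique
solution of B z = -e_alpha) is nonzero algebraically, i.e. nonzero at some
real assignment of the r_{jm} at which B is invertible.\<close>
definition influence :: "'e set \<Rightarrow> 'm set \<Rightarrow> ('e \<Rightarrow> 'm \<Rightarrow> real) \<Rightarrow> ('e \<Rightarrow> 'm \<Rightarrow> real)
                         \<Rightarrow> 'e + 'm \<Rightarrow> 'e + 'm \<Rightarrow> bool" where
  "influence E M y yb \<alpha> \<beta> \<longleftrightarrow> \<alpha> \<in> E <+> M \<and> \<beta> \<in> E <+> M \<and>
     (\<exists>r. rate_assign E M y r \<and> det_on (E <+> M) (Bmat y yb r) \<noteq> 0 \<and>
        (\<forall>z. (\<forall>\<gamma>\<in>E <+> M. (\<Sum>\<delta>\<in>E <+> M. Bmat y yb r \<gamma> \<delta> * z \<delta>) = (if \<gamma> = \<alpha> then -1 else 0))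
             \<longrightarrow> z \<beta> \<noteq> 0))"

definition augmentation ::
  "'e set \<Rightarrow> 'm set \<Rightarrow> ('e \<Rightarrow> 'm \<Rightarrow> real) \<Rightarrow> ('e \<Rightarrow> 'm \<Rightarrow> real) \<Rightarrow>
   'e set \<Rightarrow> 'm set \<Rightarrow> ('e \<Rightarrow> 'm \<Rightarrow> real) \<Rightarrow> ('e \<Rightarrow> 'm \<Rightarrow> real) \<Rightarrow> bool" where
  "augmentation E1 M1 y1 yb1 E0 M0 y0 yb0 \<longleftrightarrow> E0 \<subseteq> E1 \<and> M0 \<subseteq> M1 \<and>
     (\<forall>j\<in>E0. \<forall>m\<in>M0. y1 j m = y0 j m \<and> yb1 j m = yb0 j m) \<and>
     (\<forall>j\<in>E0. \<forall>m\<in>M1 - M0. y1 j m = 0 \<and> yb1 j m = 0)"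

definition partial_child_selection ::
  "'e set \<Rightarrow> 'm set \<Rightarrow> ('e \<Rightarrow> 'm \<Rightarrow> real) \<Rightarrow> 'e set \<Rightarrow> 'm set \<Rightarrow> ('m \<Rightarrow> 'e) \<Rightarrow> bool" where
  "partial_child_selection E1 M1 y1 E0 M0 J \<longleftrightarrow>
     inj_on J (M1 - M0) \<and> J ` (M1 - M0) \<subseteq> E1 - E0 \<and> (\<forall>m\<in>M1 - M0. vdash y1 m (J m))"

end

theory Submission
  imports Defs "Jordan_Normal_Form.Determinant"
begin

lemma det_on_mat:
  fixes f :: "'a \<Rightarrow> 'a \<Rightarrow> real"
  assumes e: "bij_betw e {0..<n} A"
  shows "det_on A f = Determinant.det (Matrix.mat n n (\<lambda>(i,j). f (e i) (e j)))"
proof -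
  define e' where "e' = inv_into {0..<n} e"
  have fA: "finite A" using e bij_betw_finite by blast
  have e'e: "\<And>i. i \<in> {0..<n} \<Longrightarrow> e' (e i) = i" using e unfolding e'_def by (simp add: bij_betw_inv_into_left)
  have ee': "\<And>x. x \<in> A \<Longrightarrow> e (e' x) = x" using e unfolding e'_def by (simp add: bij_betw_inv_into_right)
  have e'bij: "bij_betw e' A {0..<n}" using e unfolding e'_def by (simp add: bij_betw_inv_into)
  define T where "T = (\<lambda>q x. if x \<in> A then e (q (e' x)) else x)"
  define U where "U = (\<lambda>p i. if i \<in> {0..<n} then e' (p (e i)) else i)"
  have PB1: "permutes_bij_finite q {0..<n} A e e'" if "q permutes {0..<n}" for q
    unfolding permutes_bij_finite_def permutes_bij_def permutes_bij_finite_axioms_def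
    using that e e'e by auto
  have PB2: "permutes_bij_finite p A {0..<n} e' e" if "p permutes A" for p
    unfolding permutes_bij_finite_def permutes_bij_def permutes_bij_finite_axioms_def
    using that e'bij ee' fA by auto
  have det: "Determinant.det (Matrix.mat n n (\<lambda>(i,j). f (e i) (e j))) =
     (\<Sum>q | q permutes {0..<n}. of_int (sign q) * (\<Prod>i = 0..<n. f (e i) (e (q i))))"
    by (subst det_def'[of _ n]) (auto intro!: sum.cong prod.cong simp: permutes_in_image)
  have "det_on A f = (\<Sum>q | q permutes {0..<n}. of_int (sign (T q)) * (\<Prod>x\<in>A. f x (T q x)))"
    unfolding det_on_def
  proof (rule sum.reindex_bij_witness[where i=T and j=U])
    fix p assume "p \<in> {p. p permutes A}"
    hence p: "p permutes A" by simp
    show "T (U p) = p"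
    proof
      fix x show "T (U p) x = p x"
        using p e'bij ee' permutes_in_image[OF p] permutes_not_in[OF p]
        by (auto simp: T_def U_def bij_betw_def)
    qed
    show "U p \<in> {q. q permutes {0..<n}}"
      using permutes_bij.permutes_p'[OF PB2[OF p, THEN permutes_bij_finite.axioms(1)]] by (simp add: U_def)
  next
    fix q assume "q \<in> {q. q permutes {0..<n}}"
    hence q: "q permutes {0..<n}" by simp
    show "U (T q) = q"
    proof
      fix x show "U (T q) x = q x"
        using q e e'e permutes_in_image[OF q] permutes_not_in[OF q]
        by (auto simp: T_def U_def bij_betw_def)
    qed
    show "T q \<in> {p. p permutes A}"
      using permutes_bij.permutes_p'[OF PB1[OF q, THEN permutes_bij_finite.axioms(1)]] by (simp add: T_def)
  next
    fix p assume "p \<in> {p. p permutes A}"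
    hence p: "p permutes A" by simp
    show "of_int (sign (T (U p))) * (\<Prod>x\<in>A. f x (T (U p) x)) = of_int (sign p) * (\<Prod>i\<in>A. f i (p i))"
    proof -
      have "T (U p) = p"
      proof
        fix x show "T (U p) x = p x"
          using p e'bij ee' permutes_in_image[OF p] permutes_not_in[OF p]
          by (auto simp: T_def U_def bij_betw_def)
      qed
      thus ?thesis by simp
    qed
  qed
  also have "\<dots> = (\<Sum>q | q permutes {0..<n}. of_int (sign q) * (\<Prod>i = 0..<n. f (e i) (e (q i))))"
  proof (rule sum.cong[OF refl])
    fix q assume "q \<in> {q. q permutes {0..<n}}"
    hence q: "q permutes {0..<n}" by simp
    have s: "sign (T q) = sign q"
      using permutes_bij_finite.sign_p'[OF PB1[OF q]] by (simp add: T_def)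
    have "(\<Prod>x\<in>A. f x (T q x)) = (\<Prod>i\<in>{0..<n}. f (e i) (T q (e i)))"
      using prod.reindex_bij_betw[OF e, of "\<lambda>x. f x (T q x)"] by simp
    also have "\<dots> = (\<Prod>i = 0..<n. f (e i) (e (q i)))"
      using e'e e by (intro prod.cong) (auto simp: T_def bij_betw_def)
    finally show "of_int (sign (T q)) * (\<Prod>x\<in>A. f x (T q x)) = of_int (sign q) * (\<Prod>i = 0..<n. f (e i) (e (q i)))"
      using s by simp
  qed
  finally show ?thesis using det by simp
qed

lemma det_on_iff:
  fixes f :: "'a \<Rightarrow> 'a \<Rightarrow> real"
  assumes fA: "finite A"
  shows "det_on A f \<noteq> 0 \<longleftrightarrow> (\<forall>z. (\<forall>i\<in>A. (\<Sum>j\<in>A. f i j * z j) = 0) \<longrightarrow> (\<forall>j\<in>A. z j = 0))"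
proof -
  define n where "n = card A"
  obtain e where e: "bij_betw e {0..<n} A" using ex_bij_betw_nat_finite[OF fA] n_def by blast
  define e' where "e' = inv_into {0..<n} e"
  have e'e: "\<And>i. i \<in> {0..<n} \<Longrightarrow> e' (e i) = i" using e unfolding e'_def by (simp add: bij_betw_inv_into_left)
  have ee': "\<And>x. x \<in> A \<Longrightarrow> e (e' x) = x" using e unfolding e'_def by (simp add: bij_betw_inv_into_right)
  have e'bij: "bij_betw e' A {0..<n}" using e unfolding e'_def by (simp add: bij_betw_inv_into)
  have eA: "\<And>i. i < n \<Longrightarrow> e i \<in> A" using e by (auto simp: bij_betw_def)
  have e'A: "\<And>x. x \<in> A \<Longrightarrow> e' x < n" using e'bij by (auto simp: bij_betw_def)
  define M where "M = Matrix.mat n n (\<lambda>(i,j). f (e i) (e j))"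
  have Mc: "M \<in> carrier_mat n n" by (simp add: M_def)
  have key: "(M *\<^sub>v v) $ k = (\<Sum>j\<in>A. f (e k) j * z j)"
    if "v \<in> carrier_vec n" "k < n" "\<And>l. l < n \<Longrightarrow> z (e l) = v $ l" for v k z
  proof -
    have "(M *\<^sub>v v) $ k = (\<Sum>l\<in>{0..<n}. f (e k) (e l) * v $ l)"
      using that by (simp add: M_def scalar_prod_def)
    also have "\<dots> = (\<Sum>l\<in>{0..<n}. f (e k) (e l) * z (e l))"
      using that by (intro sum.cong) auto
    also have "\<dots> = (\<Sum>j\<in>A. f (e k) j * z j)"
      using sum.reindex_bij_betw[OF e, of "\<lambda>j. f (e k) j * z j"] by simp
    finally show ?thesis .
  qed
  have dm: "det_on A f = Determinant.det M" unfolding M_def by (rule det_on_mat[OF e])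
  show ?thesis
  proof
    assume d: "det_on A f \<noteq> 0"
    show "\<forall>z. (\<forall>i\<in>A. (\<Sum>j\<in>A. f i j * z j) = 0) \<longrightarrow> (\<forall>j\<in>A. z j = 0)"
    proof (intro allI impI ballI)
      fix z j assume h: "\<forall>i\<in>A. (\<Sum>j\<in>A. f i j * z j) = 0" and j: "j \<in> A"
      define v where "v = vec n (\<lambda>l. z (e l))"
      have vc: "v \<in> carrier_vec n" by (simp add: v_def)
      have "M *\<^sub>v v = 0\<^sub>v n"
      proof (rule eq_vecI)
        fix k assume "k < dim_vec (0\<^sub>v n :: real vec)"
        hence k: "k < n" by simp
        show "(M *\<^sub>v v) $ k = 0\<^sub>v n $ k"
          using key[OF vc k, of z] h eA[OF k] k by (simp add: v_def)
      qed (simp add: M_def)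
      hence "v = 0\<^sub>v n" using det_0_iff_vec_prod_zero[OF Mc] d dm vc by auto
      hence "v $ (e' j) = 0" using e'A[OF j] by simp
      thus "z j = 0" using e'A[OF j] ee'[OF j] by (simp add: v_def)
    qed
  next
    assume inj: "\<forall>z. (\<forall>i\<in>A. (\<Sum>j\<in>A. f i j * z j) = 0) \<longrightarrow> (\<forall>j\<in>A. z j = 0)"
    show "det_on A f \<noteq> 0"
    proof
      assume "det_on A f = 0"
      then obtain v where vc: "v \<in> carrier_vec n" and v0: "v \<noteq> 0\<^sub>v n" and Mv: "M *\<^sub>v v = 0\<^sub>v n"
        using det_0_iff_vec_prod_zero[OF Mc] dm by auto
      define z where "z = (\<lambda>j. v $ (e' j))"
      have zl: "\<And>l. l < n \<Longrightarrow> z (e l) = v $ l" using e'e by (simp add: z_def)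
      have "\<forall>i\<in>A. (\<Sum>j\<in>A. f i j * z j) = 0"
      proof
        fix i assume i: "i \<in> A"
        have "(\<Sum>j\<in>A. f i j * z j) = (M *\<^sub>v v) $ (e' i)"
          using key[OF vc e'A[OF i] zl] ee'[OF i] by simp
        thus "(\<Sum>j\<in>A. f i j * z j) = 0" using Mv e'A[OF i] by simp
      qed
      hence z0: "\<forall>j\<in>A. z j = 0" using inj by blast
      have "v = 0\<^sub>v n"
      proof (rule eq_vecI)
        fix l assume "l < dim_vec (0\<^sub>v n :: real vec)"
        hence l: "l < n" by simp
        show "v $ l = 0\<^sub>v n $ l" using z0 eA[OF l] zl[OF l] l by simp
      qed (use vc in simp)
      thus False using v0 by simp
    qed
  qed
qed

lemma det_on_transpose:
  fixes f :: "'a \<Rightarrow> 'a \<Rightarrow> real"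
  assumes fA: "finite A"
  shows "det_on A (\<lambda>i j. f j i) = det_on A f"
proof -
  define n where "n = card A"
  obtain e where e: "bij_betw e {0..<n} A" using ex_bij_betw_nat_finite[OF fA] n_def by blast
  have "transpose_mat (Matrix.mat n n (\<lambda>(i,j). f (e i) (e j))) = Matrix.mat n n (\<lambda>(i,j). f (e j) (e i))"
    by (rule eq_matI) auto
  hence "Determinant.det (Matrix.mat n n (\<lambda>(i,j). f (e j) (e i))) = Determinant.det (Matrix.mat n n (\<lambda>(i,j). f (e i) (e j)))"
    by (metis det_transpose mat_carrier)
  thus ?thesis using det_on_mat[OF e, of f] det_on_mat[OF e, of "\<lambda>i j. f j i"] by simp
qed

theorem theorem5p1:
  fixes E0 E1 :: "'e set" and M0 M1 :: "'m set"
    and y0 yb0 y1 yb1 :: "'e \<Rightarrow> 'm \<Rightarrow> real" and J :: "'m \<Rightarrow> 'e"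
  assumes "network E0 M0 y0 yb0" and "network E1 M1 y1 yb1"
    and "augmentation E1 M1 y1 yb1 E0 M0 y0 yb0"
    and "regular E0 M0 y0 yb0"
    and "partial_child_selection E1 M1 y1 E0 M0 J"
    and "det_on (M1 - M0) (\<lambda>m m'. stoich y1 yb1 m (J m')) \<noteq> 0"
  shows "regular E1 M1 y1 yb1 \<and>
    (\<forall>j\<in>E0. \<forall>\<alpha>\<in>E0 <+> M0.
       influence E0 M0 y0 yb0 (Inl j) \<alpha> \<longrightarrow> influence E1 M1 y1 yb1 (Inl j) \<alpha>)"
proof -
  define S0 where "S0 = stoich y0 yb0"
  define S1 where "S1 = stoich y1 yb1"
  from assms(1,2) have fE0: "finite E0" and fM0: "finite M0" and fE1: "finite E1" and fM1: "finite M1"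
    by (auto simp: network_def)
  from assms(3) have subE: "E0 \<subseteq> E1" and subM: "M0 \<subseteq> M1"
    and same: "\<And>j m. j\<in>E0 \<Longrightarrow> m\<in>M0 \<Longrightarrow> y1 j m = y0 j m \<and> yb1 j m = yb0 j m"
    and zero: "\<And>j m. j\<in>E0 \<Longrightarrow> m\<in>M1 - M0 \<Longrightarrow> y1 j m = 0 \<and> yb1 j m = 0"
    by (auto simp: augmentation_def)
  have S_same: "\<And>m j. m\<in>M0 \<Longrightarrow> j\<in>E0 \<Longrightarrow> S1 m j = S0 m j"
    using same by (simp add: S0_def S1_def stoich_def)
  have S_zero: "\<And>m j. m\<in>M1-M0 \<Longrightarrow> j\<in>E0 \<Longrightarrow> S1 m j = 0"
    using zero by (simp add: S1_def stoich_def)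
  from assms(5) have Jin: "\<And>m. m\<in>M1-M0 \<Longrightarrow> J m \<in> E1 - E0"
    and Jv: "\<And>m. m\<in>M1-M0 \<Longrightarrow> vdash y1 m (J m)"
    by (auto simp: partial_child_selection_def)
  have fM': "finite (M1 - M0)" using fM1 by simp
  have fE': "finite (E1 - E0)" using fE1 by simp
  have Cinj: "\<And>w. \<forall>m\<in>M1-M0. (\<Sum>m'\<in>M1-M0. S1 m (J m') * w m') = 0 \<Longrightarrow> \<forall>m\<in>M1-M0. w m = 0"
    using assms(6) det_on_iff[OF fM', of "\<lambda>m m'. S1 m (J m')"] unfolding S1_def by blast
  have CTinj: "\<And>w. \<forall>m\<in>M1-M0. (\<Sum>m'\<in>M1-M0. S1 m' (J m) * w m') = 0 \<Longrightarrow> \<forall>m\<in>M1-M0. w m = 0"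
  proof -
    fix w assume h: "\<forall>m\<in>M1-M0. (\<Sum>m'\<in>M1-M0. S1 m' (J m) * w m') = 0"
    have "det_on (M1-M0) (\<lambda>m m'. S1 m' (J m)) \<noteq> 0"
      using assms(6) det_on_transpose[OF fM', of "\<lambda>m m'. S1 m (J m')"] unfolding S1_def by simp
    thus "\<forall>m\<in>M1-M0. w m = 0" using h det_on_iff[OF fM', of "\<lambda>m m'. S1 m' (J m)"] by blast
  qed
  have sumM: "\<And>g. sum g M1 = sum g M0 + sum g (M1 - M0)"
    using sum.subset_diff[OF subM fM1] by (simp add: add.commute)
  have sumE: "\<And>g. sum g E1 = sum g E0 + sum g (E1 - E0)"
    using sum.subset_diff[OF subE fE1] by (simp add: add.commute)
  define ext where "ext = (\<lambda>r0 j m. r0 j m + (if m \<in> M1-M0 \<and> j = J m then 1 else 0 :: real))"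
  have r0_out: "\<And>r0 j m. rate_assign E0 M0 y0 r0 \<Longrightarrow> j \<notin> E0 \<or> m \<notin> M0 \<Longrightarrow> r0 j m = 0"
    by (auto simp: rate_assign_def)
  have ext_ra: "\<And>r0. rate_assign E0 M0 y0 r0 \<Longrightarrow> rate_assign E1 M1 y1 (ext r0)"
  proof -
    fix r0 assume ra: "rate_assign E0 M0 y0 r0"
    show "rate_assign E1 M1 y1 (ext r0)"
      unfolding rate_assign_def
    proof (intro allI impI)
      fix j m assume h: "\<not> (j \<in> E1 \<and> m \<in> M1 \<and> vdash y1 m j)"
      have "r0 j m = 0"
      proof (rule ccontr)
        assume "r0 j m \<noteq> 0"
        hence "j \<in> E0 \<and> m \<in> M0 \<and> vdash y0 m j" using ra by (auto simp: rate_assign_def)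
        thus False using h same subE subM by (auto simp: vdash_def)
      qed
      moreover have "\<not> (m \<in> M1-M0 \<and> j = J m)" using h Jin Jv by auto
      ultimately show "ext r0 j m = 0" by (simp add: ext_def)
    qed
  qed
  have ext_E0: "\<And>r0 j m. rate_assign E0 M0 y0 r0 \<Longrightarrow> j \<in> E0 \<Longrightarrow> ext r0 j m = r0 j m"
    using Jin by (auto simp: ext_def)
  have ext_E': "\<And>r0 j m. rate_assign E0 M0 y0 r0 \<Longrightarrow> j \<notin> E0 \<Longrightarrow> ext r0 j m = (if m\<in>M1-M0 \<and> j = J m then 1 else 0)"
    using r0_out by (auto simp: ext_def)
  have reg1: "regular E1 M1 y1 yb1"
  proof -
    from assms(4) have frr0: "full_row_rank E0 M0 S0" unfolding regular_def S0_def by blast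
    from assms(4) obtain r0 where ra0: "rate_assign E0 M0 y0 r0"
      and d0: "det_on M0 (\<lambda>m m'. \<Sum>j\<in>E0. S0 m j * r0 j m') \<noteq> 0"
      unfolding regular_def S0_def by blast
    have frr1: "full_row_rank E1 M1 S1"
      unfolding full_row_rank_def
    proof (intro allI impI)
      fix c assume h: "\<forall>j\<in>E1. (\<Sum>m\<in>M1. c m * S1 m j) = 0"
      have "\<forall>j\<in>E0. (\<Sum>m\<in>M0. c m * S0 m j) = 0"
      proof
        fix j assume j: "j \<in> E0"
        have "0 = (\<Sum>m\<in>M0. c m * S1 m j) + (\<Sum>m\<in>M1-M0. c m * S1 m j)"
          using h j subE sumM[of "\<lambda>m. c m * S1 m j"] by auto
        also have "(\<Sum>m\<in>M1-M0. c m * S1 m j) = 0" using S_zero j by simp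
        also have "(\<Sum>m\<in>M0. c m * S1 m j) = (\<Sum>m\<in>M0. c m * S0 m j)" using S_same j by simp
        finally show "(\<Sum>m\<in>M0. c m * S0 m j) = 0" by simp
      qed
      hence c0: "\<forall>m\<in>M0. c m = 0" using frr0 unfolding full_row_rank_def by blast
      have "\<forall>m\<in>M1-M0. (\<Sum>m'\<in>M1-M0. S1 m' (J m) * c m') = 0"
      proof
        fix m assume m: "m \<in> M1 - M0"
        have "0 = (\<Sum>m'\<in>M0. c m' * S1 m' (J m)) + (\<Sum>m'\<in>M1-M0. c m' * S1 m' (J m))"
          using h Jin[OF m] sumM[of "\<lambda>m'. c m' * S1 m' (J m)"] by auto
        also have "(\<Sum>m'\<in>M0. c m' * S1 m' (J m)) = 0" using c0 by simp
        finally show "(\<Sum>m'\<in>M1-M0. S1 m' (J m) * c m') = 0" by (simp add: mult.commute)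
      qed
      hence "\<forall>m\<in>M1-M0. c m = 0" by (rule CTinj)
      with c0 show "\<forall>m\<in>M1. c m = 0" by blast
    qed
    have K: "(\<Sum>j\<in>E1. S1 m j * ext r0 j m') = (\<Sum>j\<in>E0. S1 m j * r0 j m') + (if m' \<in> M1-M0 then S1 m (J m') else 0)"
      for m m'
    proof -
      have "(\<Sum>j\<in>E1 - E0. S1 m j * ext r0 j m') = (\<Sum>j\<in>E1 - E0. if j = J m' then (if m' \<in> M1-M0 then S1 m j else 0) else 0)"
        using ext_E'[OF ra0] by (intro sum.cong) auto
      also have "\<dots> = (if m' \<in> M1-M0 then S1 m (J m') else 0)"
        using fE' Jin by (simp add: sum.delta')
      finally have "(\<Sum>j\<in>E1 - E0. S1 m j * ext r0 j m') = (if m' \<in> M1-M0 then S1 m (J m') else 0)" .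
      moreover have "(\<Sum>j\<in>E0. S1 m j * ext r0 j m') = (\<Sum>j\<in>E0. S1 m j * r0 j m')"
        using ext_E0[OF ra0] by simp
      ultimately show ?thesis using sumE[of "\<lambda>j. S1 m j * ext r0 j m'"] by simp
    qed
    have "det_on M1 (\<lambda>m m'. \<Sum>j\<in>E1. S1 m j * ext r0 j m') \<noteq> 0"
      unfolding det_on_iff[OF fM1]
    proof (intro allI impI)
      fix x assume hx: "\<forall>m\<in>M1. (\<Sum>m'\<in>M1. (\<Sum>j\<in>E1. S1 m j * ext r0 j m') * x m') = 0"
      have "\<forall>m\<in>M1-M0. (\<Sum>m'\<in>M1-M0. S1 m (J m') * x m') = 0"
      proof
        fix m assume m: "m \<in> M1 - M0"
        have "0 = (\<Sum>m'\<in>M1. (\<Sum>j\<in>E1. S1 m j * ext r0 j m') * x m')" using hx m by auto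
        also have "\<dots> = (\<Sum>m'\<in>M1. (if m' \<in> M1-M0 then S1 m (J m') else 0) * x m')"
          unfolding K using S_zero[OF m] by simp
        also have "\<dots> = (\<Sum>m'\<in>M1-M0. S1 m (J m') * x m')"
          unfolding sumM by simp
        finally show "(\<Sum>m'\<in>M1-M0. S1 m (J m') * x m') = 0" by simp
      qed
      hence x1: "\<forall>m\<in>M1-M0. x m = 0" by (rule Cinj)
      have "\<forall>m\<in>M0. (\<Sum>m'\<in>M0. (\<Sum>j\<in>E0. S0 m j * r0 j m') * x m') = 0"
      proof
        fix m assume m: "m \<in> M0"
        have "0 = (\<Sum>m'\<in>M1. (\<Sum>j\<in>E1. S1 m j * ext r0 j m') * x m')" using hx m subM by auto
        also have "\<dots> = (\<Sum>m'\<in>M0. (\<Sum>j\<in>E1. S1 m j * ext r0 j m') * x m')"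
          unfolding sumM using x1 by simp
        also have "\<dots> = (\<Sum>m'\<in>M0. (\<Sum>j\<in>E0. S0 m j * r0 j m') * x m')"
          unfolding K using S_same m by simp
        finally show "(\<Sum>m'\<in>M0. (\<Sum>j\<in>E0. S0 m j * r0 j m') * x m') = 0" by simp
      qed
      hence x0: "\<forall>m\<in>M0. x m = 0" using d0 det_on_iff[OF fM0, of "\<lambda>m m'. \<Sum>j\<in>E0. S0 m j * r0 j m'"] by blast
      show "\<forall>m\<in>M1. x m = 0" using x0 x1 by blast
    qed
    thus ?thesis unfolding regular_def using frr1 ext_ra[OF ra0] unfolding S1_def by blast
  qed
  have infl: "\<forall>j\<in>E0. \<forall>\<alpha>\<in>E0 <+> M0. influence E0 M0 y0 yb0 (Inl j) \<alpha> \<longrightarrow> influence E1 M1 y1 yb1 (Inl j) \<alpha>"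
  proof (intro ballI impI)
    fix j \<alpha> assume j: "j \<in> E0" and \<alpha>: "\<alpha> \<in> E0 <+> M0" and inf: "influence E0 M0 y0 yb0 (Inl j) \<alpha>"
    from inf obtain r0 where ra0: "rate_assign E0 M0 y0 r0"
      and dB0: "det_on (E0 <+> M0) (Bmat y0 yb0 r0) \<noteq> 0"
      and P0: "\<forall>z. (\<forall>\<gamma>\<in>E0 <+> M0. (\<Sum>\<delta>\<in>E0 <+> M0. Bmat y0 yb0 r0 \<gamma> \<delta> * z \<delta>) = (if \<gamma> = Inl j then -1 else 0)) \<longrightarrow> z \<alpha> \<noteq> 0"
      unfolding influence_def by blast
    define r1 where "r1 = ext r0"
    have diag: "(\<Sum>k'\<in>E. Bmat yy yyb r (Inl k) (Inl k') * z (Inl k')) = - z (Inl k)"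
      if "finite E" "k \<in> E" for E k z and yy yyb :: "'e \<Rightarrow> 'm \<Rightarrow> real" and r
    proof -
      have "\<And>k'. Bmat yy yyb r (Inl k) (Inl k') * z (Inl k') = (if k = k' then - z (Inl k') else 0)" by simp
      thus ?thesis using that by (simp add: sum.delta)
    qed
    have rowE: "(\<Sum>\<delta>\<in>E <+> M. Bmat yy yyb r (Inl k) \<delta> * z \<delta>) = - z (Inl k) + (\<Sum>m\<in>M. r k m * z (Inr m))"
      if "finite E" "finite M" "k \<in> E" for E M k z and yy yyb :: "'e \<Rightarrow> 'm \<Rightarrow> real" and r
      using that diag[of E k yy yyb r z] by (simp add: sum.Plus o_def)
    have rowM: "(\<Sum>\<delta>\<in>E <+> M. Bmat yy yyb r (Inr m) \<delta> * z \<delta>) = (\<Sum>k\<in>E. stoich yy yyb m k * z (Inl k))"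
      if "finite E" "finite M" for E M m z and yy yyb :: "'e \<Rightarrow> 'm \<Rightarrow> real" and r
      using that by (simp add: sum.Plus o_def)
    have G: "(\<forall>\<delta>\<in>(E1 <+> M1) - (E0 <+> M0). z \<delta> = 0) \<and> (\<forall>\<gamma>\<in>E0 <+> M0. (\<Sum>\<delta>\<in>E0 <+> M0. Bmat y0 yb0 r0 \<gamma> \<delta> * z \<delta>) = b \<gamma>)"
      if hz: "\<forall>\<gamma>\<in>E1 <+> M1. (\<Sum>\<delta>\<in>E1 <+> M1. Bmat y1 yb1 r1 \<gamma> \<delta> * z \<delta>) = b \<gamma>"
        and bE: "\<forall>k\<in>E1-E0. b (Inl k) = 0" and bM: "\<forall>m\<in>M1-M0. b (Inr m) = 0" for z b
    proof -
      have uk: "z (Inl k) = (\<Sum>m'\<in>M1-M0. if J m' = k then z (Inr m') else 0)" if k: "k \<in> E1 - E0" for k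
      proof -
        have "b (Inl k) = - z (Inl k) + (\<Sum>m\<in>M1. r1 k m * z (Inr m))"
          using hz k rowE[OF fE1 fM1, of k y1 yb1 r1 z] by force
        hence "z (Inl k) = (\<Sum>m\<in>M1. r1 k m * z (Inr m))" using bE k by simp
        also have "\<dots> = (\<Sum>m\<in>M1. if m \<in> M1 - M0 then (if J m = k then z (Inr m) else 0) else 0)"
          using ext_E'[OF ra0] k unfolding r1_def by (intro sum.cong) auto
        also have "\<dots> = (\<Sum>m'\<in>M1-M0. if J m' = k then z (Inr m') else 0)"
          using sum.inter_restrict[OF fM1, of "\<lambda>m. if J m = k then z (Inr m) else 0" "M1 - M0"]
          by (simp add: Int_absorb1 Diff_subset)
        finally show ?thesis .
      qed
      have wM: "\<forall>m\<in>M1-M0. z (Inr m) = 0"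
      proof -
        have "\<forall>m\<in>M1-M0. (\<Sum>m'\<in>M1-M0. S1 m (J m') * z (Inr m')) = 0"
        proof
          fix m assume m: "m \<in> M1 - M0"
          have "0 = (\<Sum>k\<in>E1. S1 m k * z (Inl k))"
            using hz m rowM[OF fE1 fM1, of y1 yb1 r1 m z] bM unfolding S1_def by force
          also have "\<dots> = (\<Sum>k\<in>E1-E0. S1 m k * z (Inl k))" using sumE[of "\<lambda>k. S1 m k * z (Inl k)"] S_zero[OF m] by simp
          also have "\<dots> = (\<Sum>k\<in>E1-E0. S1 m k * (\<Sum>m'\<in>M1-M0. if J m' = k then z (Inr m') else 0))"
            using uk by simp
          also have "\<dots> = (\<Sum>k\<in>E1-E0. \<Sum>m'\<in>M1-M0. if k = J m' then S1 m k * z (Inr m') else 0)"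
            unfolding sum_distrib_left by (intro sum.cong refl) auto
          also have "\<dots> = (\<Sum>m'\<in>M1-M0. \<Sum>k\<in>E1-E0. if k = J m' then S1 m k * z (Inr m') else 0)"
            by (rule sum.swap)
          also have "\<dots> = (\<Sum>m'\<in>M1-M0. S1 m (J m') * z (Inr m'))"
            using Jin fE' by (simp add: sum.delta')
          finally show "(\<Sum>m'\<in>M1-M0. S1 m (J m') * z (Inr m')) = 0" by simp
        qed
        thus ?thesis by (rule Cinj)
      qed
      have uE: "\<forall>k\<in>E1-E0. z (Inl k) = 0"
      proof
        fix k assume k: "k \<in> E1 - E0"
        have "(\<Sum>m'\<in>M1-M0. if J m' = k then z (Inr m') else 0) = 0"
          using wM by (intro sum.neutral) auto
        thus "z (Inl k) = 0" using uk[OF k] by simp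
      qed
      have new: "\<forall>\<delta>\<in>(E1 <+> M1) - (E0 <+> M0). z \<delta> = 0" using uE wM by auto
      have oldE: "(\<Sum>\<delta>\<in>E0 <+> M0. Bmat y0 yb0 r0 (Inl k) \<delta> * z \<delta>) = b (Inl k)" if k: "k \<in> E0" for k
      proof -
        have "b (Inl k) = - z (Inl k) + (\<Sum>m\<in>M1. r1 k m * z (Inr m))"
          using hz k subE rowE[OF fE1 fM1, of k y1 yb1 r1 z] by force
        also have "(\<Sum>m\<in>M1. r1 k m * z (Inr m)) = (\<Sum>m\<in>M0. r0 k m * z (Inr m))"
          using sumM[of "\<lambda>m. r1 k m * z (Inr m)"] ext_E0[OF ra0 k] r0_out[OF ra0] unfolding r1_def by simp
        finally show ?thesis using rowE[OF fE0 fM0 k, of y0 yb0 r0 z] by simp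
      qed
      have oldM: "(\<Sum>\<delta>\<in>E0 <+> M0. Bmat y0 yb0 r0 (Inr m) \<delta> * z \<delta>) = b (Inr m)" if m: "m \<in> M0" for m
      proof -
        have "b (Inr m) = (\<Sum>k\<in>E1. S1 m k * z (Inl k))"
          using hz m subM rowM[OF fE1 fM1, of y1 yb1 r1 m z] unfolding S1_def by force
        also have "\<dots> = (\<Sum>k\<in>E0. S0 m k * z (Inl k))"
          using sumE[of "\<lambda>k. S1 m k * z (Inl k)"] uE S_same m by simp
        finally show ?thesis using rowM[OF fE0 fM0, of y0 yb0 r0 m z] unfolding S0_def by simp
      qed
      have "\<forall>\<gamma>\<in>E0 <+> M0. (\<Sum>\<delta>\<in>E0 <+> M0. Bmat y0 yb0 r0 \<gamma> \<delta> * z \<delta>) = b \<gamma>"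
        using oldE oldM by auto
      with new show ?thesis by blast
    qed
    have dB1: "det_on (E1 <+> M1) (Bmat y1 yb1 r1) \<noteq> 0"
      unfolding det_on_iff[OF finite_Plus[OF fE1 fM1]]
    proof (intro allI impI)
      fix z assume hz: "\<forall>\<gamma>\<in>E1 <+> M1. (\<Sum>\<delta>\<in>E1 <+> M1. Bmat y1 yb1 r1 \<gamma> \<delta> * z \<delta>) = 0"
      from G[of z "\<lambda>_. 0"] hz have g1: "\<forall>\<delta>\<in>(E1 <+> M1) - (E0 <+> M0). z \<delta> = 0"
        and g2: "\<forall>\<gamma>\<in>E0 <+> M0. (\<Sum>\<delta>\<in>E0 <+> M0. Bmat y0 yb0 r0 \<gamma> \<delta> * z \<delta>) = 0" by auto
      have "\<forall>\<delta>\<in>E0 <+> M0. z \<delta> = 0"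
        using g2 dB0 det_on_iff[OF finite_Plus[OF fE0 fM0], of "Bmat y0 yb0 r0"] by blast
      with g1 show "\<forall>\<delta>\<in>E1 <+> M1. z \<delta> = 0" by blast
    qed
    have P1: "\<forall>z. (\<forall>\<gamma>\<in>E1 <+> M1. (\<Sum>\<delta>\<in>E1 <+> M1. Bmat y1 yb1 r1 \<gamma> \<delta> * z \<delta>) = (if \<gamma> = Inl j then -1 else 0)) \<longrightarrow> z \<alpha> \<noteq> 0"
    proof (intro allI impI)
      fix z assume hz: "\<forall>\<gamma>\<in>E1 <+> M1. (\<Sum>\<delta>\<in>E1 <+> M1. Bmat y1 yb1 r1 \<gamma> \<delta> * z \<delta>) = (if \<gamma> = Inl j then -1 else 0)"
      have "\<forall>\<gamma>\<in>E0 <+> M0. (\<Sum>\<delta>\<in>E0 <+> M0. Bmat y0 yb0 r0 \<gamma> \<delta> * z \<delta>) = (if \<gamma> = Inl j then -1 else 0)"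
      proof -
        have h2: "\<forall>k\<in>E1-E0. (if (Inl k :: 'e + 'm) = Inl j then -1 else (0::real)) = 0" using j by auto
        have h3: "\<forall>m\<in>M1-M0. (if (Inr m :: 'e + 'm) = Inl j then -1 else (0::real)) = 0" by auto
        show ?thesis using G[OF hz h2 h3] by blast
      qed
      thus "z \<alpha> \<noteq> 0" using P0 by blast
    qed
    have "\<alpha> \<in> E1 <+> M1" using \<alpha> subE subM by auto
    moreover have "Inl j \<in> E1 <+> M1" using j subE by auto
    ultimately show "influence E1 M1 y1 yb1 (Inl j) \<alpha>"
      unfolding influence_def using ext_ra[OF ra0] dB1 P1 unfolding r1_def by blast
  qed
  show ?thesis using reg1 infl by blast
qed

end
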